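(* Let $X,Y$ be real Hilbert spaces and $a:X\times Y\to\mathbb{R}\cup\{+\infty\}$ such that for every $y\in Y$ the function $a(\cdot,y)$ is proper and $\Phi_{lsc}$-convex on $X$, and for every $x\in X$ the function $a(x,\cdot)$ is concave on $Y$. Assume $\beta:=\inf_{x\in X}\sup_{y\in Y}a(x,y)<+\infty$. If there exist $y_1,y_2\in Y$ and $\bar x\in\mathrm{dom}\,a(\cdot,y_1)\cap\mathrm{dom}\,a(\cdot,y_2)$ with $a(\bar x,y_1)\ge\beta$ and $a(\bar x,y_2)\ge\beta$ such that $a(\cdot,y_1)$ and $a(\cdot,y_2)$ satisfy $ZS(0,\bar x)$, then $\sup_{y\in Y}\inf_{x\in X}a(x,y)=\inf_{x\in X}\sup_{y\in Y}a(x,y)$.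
   Context: $\Phi_{lsc}$ is the class of functions $\varphi(x)=-a\|x\|^2+\langle v,x\rangle+c$ ($a\ge0$, $v\in X^*$, $c\in\mathbb{R}$); $\mathrm{supp}(f)=\{\varphi\in\Phi_{lsc}:\varphi\le f\}$; $f$ is $\Phi_{lsc}$-convex if $f=\sup\mathrm{supp}(f)$ pointwise; proper means $\mathrm{supp}(f)\ne\emptyset$ and $\mathrm{dom}(f)\ne\emptyset$. $\partial_{lsc}f(\bar x)$ is the set of $(a,v)\in\mathbb{R}_+\times X^*$ with $f(x)-f(\bar x)\ge\langle v,x-\bar x\rangle-a\|x\|^2+a\|\bar x\|^2$ for all $x\in X$. Functions $f,g$ satisfy $ZS(0,\bar x)$ if $0=(0,0)\in\mathrm{co}(\partial_{lsc}f(\bar x)\cup\partial_{lsc}g(\bar x))$, convex hull in $\mathbb{R}\times X^*$. *)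

theory Defs
  imports "HOL-Analysis.Analysis"
begin

text \<open>Real Hilbert spaces are rendered as types of class real_inner and complete_space;
  the dual X* is identified with X via the Riesz representation, so a continuous
  linear functional v is applied as the inner product v \<bullet> x.
  Functions with values in the reals extended by +infinity are ereal-valued functions
  that never take the value -infinity.\<close>

definition phi_lsc :: "real \<Rightarrow> 'a::real_inner \<Rightarrow> real \<Rightarrow> 'a \<Rightarrow> real" where
  "phi_lsc a v c x = - a * (norm x)\<^sup>2 + inner v x + c"

text \<open>The elementary function phi_lsc a v c is identified with its parameters (a,v,c), a \<ge> 0.\<close>
definition supp_lsc :: "('a::real_inner \<Rightarrow> ereal) \<Rightarrow> (real \<times> 'a \<times> real) set" where
  "supp_lsc f = {(a, v, c). a \<ge> 0 \<and> (\<forall>x. ereal (phi_lsc a v c x) \<le> f x)}"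

definition Phi_lsc_convex :: "('a::real_inner \<Rightarrow> ereal) \<Rightarrow> bool" where
  "Phi_lsc_convex f \<longleftrightarrow> (\<forall>x. f x = (SUP p\<in>supp_lsc f. ereal (phi_lsc (fst p) (fst (snd p)) (snd (snd p)) x)))"

definition edom :: "('a \<Rightarrow> ereal) \<Rightarrow> 'a set" where
  "edom f = {x. f x < \<infinity>}"

definition proper_lsc :: "('a::real_inner \<Rightarrow> ereal) \<Rightarrow> bool" where
  "proper_lsc f \<longleftrightarrow> supp_lsc f \<noteq> {} \<and> edom f \<noteq> {}"

text \<open>The inequality f x - f xbar \<ge> ... is written additively, f x \<ge> f xbar + ...
  (equivalent whenever f xbar is finite, which is the relevant case).\<close>
definition subdiff_lsc :: "('a::real_inner \<Rightarrow> ereal) \<Rightarrow> 'a \<Rightarrow> (real \<times> 'a) set" where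
  "subdiff_lsc f xbar = {(a, v). a \<ge> 0 \<and>
     (\<forall>x. f x \<ge> f xbar + ereal (inner v (x - xbar) - a * (norm x)\<^sup>2 + a * (norm xbar)\<^sup>2))}"

definition ZS0 :: "('a::real_inner \<Rightarrow> ereal) \<Rightarrow> ('a \<Rightarrow> ereal) \<Rightarrow> 'a \<Rightarrow> bool" where
  "ZS0 f g xbar \<longleftrightarrow> (0::real \<times> 'a) \<in> convex hull (subdiff_lsc f xbar \<union> subdiff_lsc g xbar)"

definition concave_ereal :: "('b::real_vector \<Rightarrow> ereal) \<Rightarrow> bool" where
  "concave_ereal g \<longleftrightarrow> (\<forall>y1 y2 t. 0 < t \<and> t < 1 \<longrightarrow>
      ereal t * g y1 + ereal (1 - t) * g y2 \<le> g (t *\<^sub>R y1 + (1 - t) *\<^sub>R y2))"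

end

theory Submission
  imports Defs
begin

theorem mainTheorem14:
  fixes a :: "'x::{real_inner, complete_space} \<Rightarrow> 'y::{real_inner, complete_space} \<Rightarrow> ereal"
  assumes no_minf: "\<And>x y. a x y \<noteq> -\<infinity>"
    and proper: "\<And>y. proper_lsc (\<lambda>x. a x y)"
    and convex: "\<And>y. Phi_lsc_convex (\<lambda>x. a x y)"
    and concave: "\<And>x. concave_ereal (\<lambda>y. a x y)"
    and beta_fin: "(INF x. SUP y. a x y) < \<infinity>"
    and xbar_dom: "xbar \<in> edom (\<lambda>x. a x y1) \<inter> edom (\<lambda>x. a x y2)"
    and ge1: "a xbar y1 \<ge> (INF x. SUP y. a x y)"
    and ge2: "a xbar y2 \<ge> (INF x. SUP y. a x y)"
    and zs: "ZS0 (\<lambda>x. a x y1) (\<lambda>x. a x y2) xbar"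
  shows "(SUP y. INF x. a x y) = (INF x. SUP y. a x y)"
proof -
  define \<beta> where "\<beta> = (INF x. SUP y. a x y)"
  define S1 where "S1 = subdiff_lsc (\<lambda>x. a x y1) xbar"
  define S2 where "S2 = subdiff_lsc (\<lambda>x. a x y2) xbar"
  define c1 where "c1 = real_of_ereal (a xbar y1)"
  define c2 where "c2 = real_of_ereal (a xbar y2)"
  have ac1: "a xbar y1 = ereal c1" using xbar_dom no_minf[of xbar y1]
    unfolding c1_def edom_def by (cases "a xbar y1") auto
  have ac2: "a xbar y2 = ereal c2" using xbar_dom no_minf[of xbar y2]
    unfolding c2_def edom_def by (cases "a xbar y2") auto
  define L where "L = (\<lambda>x (p::real \<times> 'x). inner (snd p) (x - xbar) - fst p * (norm x)\<^sup>2 + fst p * (norm xbar)\<^sup>2)"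
  have S1D: "\<And>x p. p \<in> S1 \<Longrightarrow> a x y1 \<ge> ereal (c1 + L x p)"
    unfolding S1_def subdiff_lsc_def L_def using ac1 by auto
  have S2D: "\<And>x p. p \<in> S2 \<Longrightarrow> a x y2 \<ge> ereal (c2 + L x p)"
    unfolding S2_def subdiff_lsc_def L_def using ac2 by auto
  from zs obtain S u where S: "finite S" "S \<subseteq> S1 \<union> S2" "\<forall>x\<in>S. 0 \<le> u x" "sum u S = 1"
      "sum (\<lambda>v. u v *\<^sub>R v) S = 0"
    unfolding ZS0_def convex_hull_explicit S1_def S2_def by auto
  define Z where "Z = {p\<in>S. u p > 0}"
  have fZ: "finite Z" using S(1) unfolding Z_def by auto
  have ZS: "Z \<subseteq> S" unfolding Z_def by auto
  have Z0: "\<forall>i\<in>S - Z. u i = 0" using S(3) unfolding Z_def by force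
  have sumZ: "sum u Z = 1"
    using S(4) sum.mono_neutral_left[OF S(1) ZS, of u] Z0 by simp
  have sumZv: "sum (\<lambda>v. u v *\<^sub>R v) Z = 0"
    using S(5) sum.mono_neutral_left[OF S(1) ZS, of "\<lambda>v. u v *\<^sub>R v"] Z0 by simp
  define A where "A = Z \<inter> S1"
  define B where "B = Z - S1"
  have AB: "A \<inter> B = {}" "A \<union> B = Z" unfolding A_def B_def by auto
  have fA: "finite A" and fB: "finite B" using fZ unfolding A_def B_def by auto
  have Apos: "\<And>p. p \<in> A \<Longrightarrow> u p > 0" and Bpos: "\<And>p. p \<in> B \<Longrightarrow> u p > 0"
    unfolding A_def B_def Z_def by auto
  have AS1: "A \<subseteq> S1" and BS2: "B \<subseteq> S2" using S(2) unfolding A_def B_def Z_def by auto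
  have split: "\<And>f. sum f Z = sum f A + sum f B"
    using sum.union_disjoint[OF fA fB AB(1)] AB(2) by simp
  define l where "l = sum u A"
  have l1: "sum u B = 1 - l" using split[of u] sumZ unfolding l_def by simp
  have l0: "0 \<le> l" unfolding l_def using Apos by (simp add: sum_nonneg less_imp_le)
  have l1': "0 \<le> 1 - l" using l1 Bpos by (metis sum_nonneg less_imp_le)
  have lpos: "A \<noteq> {} \<Longrightarrow> l > 0" unfolding l_def using fA Apos by (simp add: sum_pos)
  have lpos2: "B \<noteq> {} \<Longrightarrow> 1 - l > 0" unfolding l1[symmetric] using fB Bpos by (simp add: sum_pos)
  have A0: "A = {} \<Longrightarrow> l = 0" unfolding l_def by simp
  have B0: "B = {} \<Longrightarrow> 1 - l = 0" using l1 by simp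
  have Lsum: "\<And>x. sum (\<lambda>p. u p * L x p) Z = 0"
  proof -
    fix x
    have f0: "sum (\<lambda>p. u p * fst p) Z = 0" and s0: "sum (\<lambda>p. u p *\<^sub>R snd p) Z = 0"
      using arg_cong[OF sumZv, of fst] arg_cong[OF sumZv, of snd]
      by (simp_all add: fst_sum snd_sum)
    have "sum (\<lambda>p. u p * L x p) Z = inner (sum (\<lambda>p. u p *\<^sub>R snd p) Z) (x - xbar)
        - sum (\<lambda>p. u p * fst p) Z * (norm x)\<^sup>2 + sum (\<lambda>p. u p * fst p) Z * (norm xbar)\<^sup>2"
    proof -
      have "sum (\<lambda>p. u p * L x p) Z = sum (\<lambda>p. inner (u p *\<^sub>R snd p) (x - xbar)
          - (u p * fst p) * (norm x)\<^sup>2 + (u p * fst p) * (norm xbar)\<^sup>2) Z"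
        by (rule sum.cong) (simp_all add: L_def algebra_simps)
      also have "\<dots> = inner (sum (\<lambda>p. u p *\<^sub>R snd p) Z) (x - xbar)
        - sum (\<lambda>p. u p * fst p) Z * (norm x)\<^sup>2 + sum (\<lambda>p. u p * fst p) Z * (norm xbar)\<^sup>2"
        by (simp only: sum.distrib sum_subtractf inner_sum_left sum_distrib_right)
      finally show ?thesis .
    qed
    then show "sum (\<lambda>p. u p * L x p) Z = 0" using f0 s0 by simp
  qed
  have cb: "\<beta> \<le> ereal (l * c1 + (1 - l) * c2)"
  proof -
    have "\<beta> \<le> ereal (min c1 c2)" using ge1 ge2 ac1 ac2 unfolding \<beta>_def
      by (simp add: min_def)
    also have "min c1 c2 \<le> l * c1 + (1 - l) * c2"
    proof -
      have "l * min c1 c2 \<le> l * c1" "(1-l) * min c1 c2 \<le> (1-l) * c2"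
        using l0 l1' by (simp_all add: mult_left_mono)
      then show ?thesis by (simp add: algebra_simps)
    qed
    finally show ?thesis by simp
  qed
  have key: "\<And>x. \<beta> \<le> ereal l * a x y1 + ereal (1 - l) * a x y2"
  proof -
    fix x
    show "\<beta> \<le> ereal l * a x y1 + ereal (1 - l) * a x y2"
    proof (cases "(A \<noteq> {} \<and> a x y1 = \<infinity>) \<or> (B \<noteq> {} \<and> a x y2 = \<infinity>)")
      case True
      have n1: "ereal l * a x y1 \<noteq> -\<infinity>" using l0 no_minf[of x y1]
        by (cases "a x y1") (auto simp: ereal_mult_infty)
      have n2: "ereal (1-l) * a x y2 \<noteq> -\<infinity>" using l1' no_minf[of x y2]
        by (cases "a x y2") (auto simp: ereal_mult_infty)
      from True have "ereal l * a x y1 + ereal (1 - l) * a x y2 = \<infinity>"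
      proof
        assume h: "A \<noteq> {} \<and> a x y1 = \<infinity>"
        then have "ereal l * a x y1 = \<infinity>" using lpos by simp
        then show ?thesis using n2 by simp
      next
        assume h: "B \<noteq> {} \<and> a x y2 = \<infinity>"
        then have "ereal (1-l) * a x y2 = \<infinity>" using lpos2 by simp
        then show ?thesis using n1 by simp
      qed
      then show ?thesis by (metis ereal_less_eq(1))
    next
      case False
      define r1 where "r1 = real_of_ereal (a x y1)"
      define r2 where "r2 = real_of_ereal (a x y2)"
      have e1: "A \<noteq> {} \<Longrightarrow> a x y1 = ereal r1" using False no_minf[of x y1]
        unfolding r1_def by (cases "a x y1") auto
      have e2: "B \<noteq> {} \<Longrightarrow> a x y2 = ereal r2" using False no_minf[of x y2]
        unfolding r2_def by (cases "a x y2") auto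
      have t1: "ereal l * a x y1 = ereal (l * r1)"
        using e1 A0 by (cases "A = {}") (auto simp: zero_ereal_def[symmetric])
      have t2: "ereal (1-l) * a x y2 = ereal ((1-l) * r2)"
        using e2 B0 by (cases "B = {}") (auto simp: zero_ereal_def[symmetric])
      have i1: "\<And>p. p \<in> A \<Longrightarrow> c1 + L x p \<le> r1"
      proof -
        fix p assume p: "p \<in> A"
        then have "ereal (c1 + L x p) \<le> ereal r1" using S1D[of p x] AS1 e1 by (metis empty_iff subsetD)
        then show "c1 + L x p \<le> r1" by simp
      qed
      have i2: "\<And>p. p \<in> B \<Longrightarrow> c2 + L x p \<le> r2"
      proof -
        fix p assume p: "p \<in> B"
        then have "ereal (c2 + L x p) \<le> ereal r2" using S2D[of p x] BS2 e2 by (metis empty_iff subsetD)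
        then show "c2 + L x p \<le> r2" by simp
      qed
      have m1: "sum (\<lambda>p. u p * (c1 + L x p)) A \<le> sum (\<lambda>p. u p * r1) A"
        using i1 Apos by (intro sum_mono) (simp add: mult_left_mono less_imp_le)
      have m2: "sum (\<lambda>p. u p * (c2 + L x p)) B \<le> sum (\<lambda>p. u p * r2) B"
        using i2 Bpos by (intro sum_mono) (simp add: mult_left_mono less_imp_le)
      have "sum (\<lambda>p. u p * (c1 + L x p)) A + sum (\<lambda>p. u p * (c2 + L x p)) B
          \<le> l * r1 + (1 - l) * r2"
      proof -
        have "sum (\<lambda>p. u p * r1) A = l * r1" unfolding l_def by (simp add: sum_distrib_right)
        moreover have "sum (\<lambda>p. u p * r2) B = (1 - l) * r2" using l1 by (simp add: sum_distrib_right[symmetric])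
        ultimately show ?thesis using m1 m2 by linarith
      qed
      moreover have "sum (\<lambda>p. u p * (c1 + L x p)) A + sum (\<lambda>p. u p * (c2 + L x p)) B
          = l * c1 + (1 - l) * c2 + sum (\<lambda>p. u p * L x p) Z"
      proof -
        have "sum (\<lambda>p. u p * (c1 + L x p)) A = l * c1 + sum (\<lambda>p. u p * L x p) A"
          unfolding l_def by (simp add: distrib_left sum.distrib sum_distrib_right)
        moreover have "sum (\<lambda>p. u p * (c2 + L x p)) B = (1 - l) * c2 + sum (\<lambda>p. u p * L x p) B"
          using l1 by (simp add: distrib_left sum.distrib sum_distrib_right[symmetric])
        ultimately show ?thesis using split[of "\<lambda>p. u p * L x p"] by simp
      qed
      ultimately have "l * c1 + (1 - l) * c2 \<le> l * r1 + (1 - l) * r2" using Lsum[of x] by simp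
      then show ?thesis using cb t1 t2 by (simp add: order_trans)
    qed
  qed
  define yb where "yb = l *\<^sub>R y1 + (1 - l) *\<^sub>R y2"
  have ayb: "\<And>x. \<beta> \<le> a x yb"
  proof -
    fix x
    show "\<beta> \<le> a x yb"
    proof (cases "l = 0 \<or> l = 1")
      case True
      then show ?thesis
      proof
        assume "l = 0" then show ?thesis using key[of x] unfolding yb_def by (simp add: zero_ereal_def[symmetric])
      next
        assume "l = 1" then show ?thesis using key[of x] unfolding yb_def by (simp add: zero_ereal_def[symmetric])
      qed
    next
      case False
      then have "0 < l" "l < 1" using l0 l1' by auto
      then have "ereal l * a x y1 + ereal (1 - l) * a x y2 \<le> a x yb"
        using concave[of x] unfolding concave_ereal_def yb_def by blast
      then show ?thesis using key[of x] by (rule order_trans[rotated])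
    qed
  qed
  have "\<beta> \<le> (INF x. a x yb)" by (rule INF_greatest) (rule ayb)
  also have "\<dots> \<le> (SUP y. INF x. a x y)" by (rule SUP_upper) simp
  finally have ge: "\<beta> \<le> (SUP y. INF x. a x y)" .
  have le: "(SUP y. INF x. a x y) \<le> \<beta>"
    unfolding \<beta>_def
  proof (rule SUP_least, rule INF_greatest)
    fix y x
    have "(INF x. a x y) \<le> a x y" by (rule INF_lower) simp
    also have "\<dots> \<le> (SUP y. a x y)" by (rule SUP_upper) simp
    finally show "(INF x. a x y) \<le> (SUP y. a x y)" .
  qed
  show ?thesis using ge le unfolding \<beta>_def by simp
qed

end
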